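(* Let $\mathbf K$ be a commutative field, $p\ge1$, and let $T_1,\dots,T_d\in\mathrm{Rec}_{p\times p}(\mathbf K)$ be linearly independent elements spanning a recursively closed subspace, with shift matrices $\rho(s,t)\in\mathbf K^{d\times d}$ ($0\le s,t<p$) defined by $\rho(s,t)T_k=\sum_{j=1}^d\rho(s,t)_{j,k}T_j$. Then all of $T_1,\dots,T_d$ are of Toeplitz type if and only if the following two conditions hold: (1) $\rho(s,t)$ depends only on $s-t$ for $0\le s,t<p$; (2) writing $\rho(s-t)$ for $\rho(s,t)$ (so $\rho(m)$ is defined for $1-p\le m\le p-1$), one has $\rho(s+p)\rho(t)=\rho(s)\rho(t+1)$ for all $1-p\le s<0$ and $1-p\le t<p-1$.
   Context: $\mathcal M_{p\times p}^l$ is the set of pairs $(U,W)$ of words of length $l$ over $\{0,\dots,p-1\}$ and $\mathcal M_{p\times p}=\bigcup_l\mathcal M_{p\times p}^l$. Functions $A:\mathcal M_{p\times p}\to\mathbf K$ have values $A[U,W]$; shift maps act by $(\rho(S,T)A)[U,W]=A[US,WT]$; a subspace is recursively closed if invariant under all shift maps; $\mathrm{Rec}_{p\times p}(\mathbf K)$ is the set of $A$ whose span of $\{\rho(S,T)A\}$ is finite-dimensional. Words $u_1\dots u_l$ are identified with integers $\sum_j u_jp^{j-1}\in\{0,\dots,p^l-1\}$, so $A[\mathcal M_{p\times p}^l]$ is a $p^l\times p^l$ matrix; $A$ is of Toeplitz type if each such matrix is Toeplitz (entry $(u,w)$ depends only on $u-w$). Products of shift matrices are ordinary matrix products. *)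

theory Defs
  imports "Jordan_Normal_Form.Matrix"
begin

text \<open>Words over the alphabet {0,...,p-1} are lists of naturals with entries below p.
  A function A on M_{p x p} is represented as a function on pairs of lists that
  vanishes outside M_{p x p}.\<close>

definition word :: "nat \<Rightarrow> nat list \<Rightarrow> bool" where
  "word p U \<longleftrightarrow> (\<forall>x\<in>set U. x < p)"

definition inM :: "nat \<Rightarrow> nat list \<Rightarrow> nat list \<Rightarrow> bool" where
  "inM p U W \<longleftrightarrow> word p U \<and> word p W \<and> length U = length W"

definition supported :: "nat \<Rightarrow> (nat list \<Rightarrow> nat list \<Rightarrow> 'a::zero) \<Rightarrow> bool" where
  "supported p A \<longleftrightarrow> (\<forall>U W. \<not> inM p U W \<longrightarrow> A U W = 0)"

definition shift :: "nat \<Rightarrow> nat list \<Rightarrow> nat list \<Rightarrow> (nat list \<Rightarrow> nat list \<Rightarrow> 'a::zero)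
    \<Rightarrow> (nat list \<Rightarrow> nat list \<Rightarrow> 'a)" where
  "shift p S T A = (\<lambda>U W. if inM p U W then A (U @ S) (W @ T) else 0)"

definition lincomb :: "(nat list \<Rightarrow> nat list \<Rightarrow> 'a::field) set
    \<Rightarrow> (nat list \<Rightarrow> nat list \<Rightarrow> 'a) \<Rightarrow> bool" where
  "lincomb B f \<longleftrightarrow> (\<exists>c. f = (\<lambda>U W. \<Sum>b\<in>B. c b * b U W))"

text \<open>Rec_{p x p}(K): the span of all shifts of A is finite-dimensional, i.e.
  contained in the span of a finite set.\<close>
definition Rec :: "nat \<Rightarrow> (nat list \<Rightarrow> nat list \<Rightarrow> 'a::field) \<Rightarrow> bool" where
  "Rec p A \<longleftrightarrow> supported p A \<and>
     (\<exists>B. finite B \<and> (\<forall>S T. inM p S T \<longrightarrow> lincomb B (shift p S T A)))"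

definition word_val :: "nat \<Rightarrow> nat list \<Rightarrow> int" where
  "word_val p U = (\<Sum>j<length U. int (U ! j) * int p ^ j)"

definition toeplitz_type :: "nat \<Rightarrow> (nat list \<Rightarrow> nat list \<Rightarrow> 'a) \<Rightarrow> bool" where
  "toeplitz_type p A \<longleftrightarrow> (\<forall>U W U' W'. inM p U W \<and> inM p U' W' \<and> length U = length U'
      \<and> word_val p U - word_val p W = word_val p U' - word_val p W' \<longrightarrow> A U W = A U' W')"

definition rho_diff :: "(nat \<Rightarrow> nat \<Rightarrow> 'a mat) \<Rightarrow> int \<Rightarrow> 'a mat" where
  "rho_diff rho m = (if m \<ge> 0 then rho (nat m) 0 else rho 0 (nat (- m)))"

end

theory Submission
  imports Defs
begin


definition okd :: "nat \<Rightarrow> int list \<Rightarrow> bool" where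
  "okd p ms \<longleftrightarrow> (\<forall>m\<in>set ms. 1 - int p \<le> m \<and> m \<le> int p - 1)"

fun dval :: "nat \<Rightarrow> int list \<Rightarrow> int" where
  "dval p [] = 0"
| "dval p (m # ms) = m + int p * dval p ms"

fun Pm :: "nat \<Rightarrow> (int \<Rightarrow> 'a::semiring_1 mat) \<Rightarrow> int list \<Rightarrow> 'a mat" where
  "Pm d R [] = 1\<^sub>m d"
| "Pm d R (m # ms) = R m * Pm d R ms"

lemma Pm_carrier:
  assumes carr: "\<And>m. 1 - int p \<le> m \<Longrightarrow> m \<le> int p - 1 \<Longrightarrow> R m \<in> carrier_mat d d"
  shows "okd p ms \<Longrightarrow> Pm d R ms \<in> carrier_mat d d"
proof (induction ms)
  case (Cons m ms)
  then have "R m \<in> carrier_mat d d" "Pm d R ms \<in> carrier_mat d d" using carr by (auto simp: okd_def)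
  then show ?case by (simp add: mult_carrier_mat)
qed simp

lemma carry_step:
  fixes R :: "int \<Rightarrow> 'a::semiring_1 mat"
  assumes carr: "\<And>m. 1 - int p \<le> m \<Longrightarrow> m \<le> int p - 1 \<Longrightarrow> R m \<in> carrier_mat d d"
    and rel: "\<And>s t. 1 - int p \<le> s \<Longrightarrow> s < 0 \<Longrightarrow> 1 - int p \<le> t \<Longrightarrow> t < int p - 1 \<Longrightarrow>
               R (s + int p) * R t = R s * R (t + 1)"
    and IH: "\<And>xs ys. length xs = n \<Longrightarrow> length ys = n \<Longrightarrow> okd p xs \<Longrightarrow> okd p ys \<Longrightarrow>
               dval p xs = dval p ys \<Longrightarrow> Pm d R xs = Pm d R ys"
    and a: "1 - int p \<le> a" "a < 0"
    and l: "length as = n" "length bs = n" and ok: "okd p as" "okd p bs"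
    and dv: "dval p as = dval p bs + 1"
  shows "R a * Pm d R as = R (a + int p) * Pm d R bs"
proof -
  have p2: "p \<ge> 2" using a by linarith
  obtain c1 r where as: "as = c1 # r" 
  proof (cases as)
    case Nil
    then have "bs = []" using l by simp
    then show ?thesis using dv Nil by simp
  qed auto
  obtain c2 r2 where bs: "bs = c2 # r2" using dv l as by (cases bs) auto
  obtain x1 xr where x: "length (x1 # xr) = n" "okd p (x1 # xr)" "dval p (x1 # xr) = dval p as"
    "x1 > 1 - int p" "x1 \<le> int p - 1"
  proof (cases "c1 > 1 - int p")
    case True
    then show ?thesis using that[of c1 r] as l ok by (auto simp: okd_def)
  next
    case F1: False
    show ?thesis
    proof (cases "c2 < int p - 1")
      case True
      then show ?thesis using that[of "c2 + 1" r2] bs l ok dv by (auto simp: okd_def)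
    next
      case False
      then have "c1 = 1 - int p" "c2 = int p - 1" using F1 ok as bs by (auto simp: okd_def)
      then have e: "int p * (dval p r - dval p r2) = 2 * int p - 1"
        using dv as bs by (simp add: algebra_simps)
      show ?thesis
      proof (cases "dval p r - dval p r2 \<le> 1")
        case True
        then have "int p * (dval p r - dval p r2) \<le> int p * 1"
          by (intro mult_left_mono) auto
        then show ?thesis using e p2 by linarith
      next
        case False
        then have "int p * (dval p r - dval p r2) \<ge> int p * 2"
          by (intro mult_left_mono) auto
        then show ?thesis using e p2 by linarith
      qed
    qed
  qed
  have okxr: "okd p xr" using x by (auto simp: okd_def)
  have e1: "Pm d R as = Pm d R (x1 # xr)" using IH[of as "x1 # xr"] x l ok by auto
  have e2: "Pm d R bs = Pm d R ((x1 - 1) # xr)"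
    using IH[of bs "(x1 - 1) # xr"] x l ok dv okxr by (auto simp: okd_def)
  have cxr: "Pm d R xr \<in> carrier_mat d d" using Pm_carrier[OF carr okxr] .
  have ca: "R a \<in> carrier_mat d d" "R (a + int p) \<in> carrier_mat d d" using a carr by auto
  have cx: "R x1 \<in> carrier_mat d d" "R (x1 - 1) \<in> carrier_mat d d" using x carr by auto
  have r: "R (a + int p) * R (x1 - 1) = R a * R x1" using rel[of a "x1 - 1"] a x by auto
  have "R a * Pm d R as = R a * (R x1 * Pm d R xr)" using e1 by simp
  also have "\<dots> = (R a * R x1) * Pm d R xr" using ca cx cxr by (simp add: assoc_mult_mat)
  also have "\<dots> = (R (a + int p) * R (x1 - 1)) * Pm d R xr" using r by simp
  also have "\<dots> = R (a + int p) * (R (x1 - 1) * Pm d R xr)" using ca cx cxr by (simp add: assoc_mult_mat)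
  also have "\<dots> = R (a + int p) * Pm d R bs" using e2 by simp
  finally show ?thesis .
qed

lemma core:
  fixes R :: "int \<Rightarrow> 'a::semiring_1 mat"
  assumes carr: "\<And>m. 1 - int p \<le> m \<Longrightarrow> m \<le> int p - 1 \<Longrightarrow> R m \<in> carrier_mat d d"
    and rel: "\<And>s t. 1 - int p \<le> s \<Longrightarrow> s < 0 \<Longrightarrow> 1 - int p \<le> t \<Longrightarrow> t < int p - 1 \<Longrightarrow>
               R (s + int p) * R t = R s * R (t + 1)"
  shows "length xs = n \<Longrightarrow> length ys = n \<Longrightarrow> okd p xs \<Longrightarrow> okd p ys \<Longrightarrow>
               dval p xs = dval p ys \<Longrightarrow> Pm d R xs = Pm d R ys"
proof (induction n arbitrary: xs ys)
  case 0
  then show ?case by simp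
next
  case (Suc n)
  obtain a as where xs: "xs = a # as" using Suc.prems by (cases xs) auto
  obtain b bs where ys: "ys = b # bs" using Suc.prems by (cases ys) auto
  have l: "length as = n" "length bs = n" using Suc.prems xs ys by auto
  have ok: "okd p as" "okd p bs" "1 - int p \<le> a" "a \<le> int p - 1" "1 - int p \<le> b" "b \<le> int p - 1"
    using Suc.prems xs ys by (auto simp: okd_def)
  define D where "D = dval p bs - dval p as"
  have ab: "a - b = int p * D" using Suc.prems xs ys by (simp add: D_def algebra_simps)
  have D3: "D = 0 \<or> D = 1 \<or> D = -1"
  proof -
    have "\<not> D \<ge> 2"
    proof
      assume "D \<ge> 2"
      then have "int p * D \<ge> int p * 2" by (intro mult_left_mono) auto
      then show False using ab ok by linarith
    qed
    moreover have "\<not> D \<le> -2"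
    proof
      assume "D \<le> -2"
      then have "int p * D \<le> int p * (-2)" by (intro mult_left_mono) auto
      then show False using ab ok by linarith
    qed
    ultimately show ?thesis by linarith
  qed
  show ?case
  proof -
    consider "D = 0" | "D = 1" | "D = -1" using D3 by blast
    then show ?thesis
    proof cases
      case 1
      then have "a = b" "dval p as = dval p bs" using ab D_def by auto
      then show ?thesis using Suc.IH[OF l ok(1,2)] xs ys by simp
    next
      case 2
      then have "a = b + int p" "dval p bs = dval p as + 1" using ab D_def by auto
      moreover have "b < 0" using ok 2 ab by simp
      ultimately have "R b * Pm d R bs = R (b + int p) * Pm d R as"
        using carry_step[OF carr rel Suc.IH, where a=b and as=bs and bs=as] ok l by blast
      then show ?thesis unfolding xs ys Pm.simps using \<open>a = b + int p\<close> by simp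
    next
      case 3
      then have "b = a + int p" "dval p as = dval p bs + 1" using ab D_def by auto
      moreover have "a < 0" using ok 3 ab by simp
      ultimately have "R a * Pm d R as = R (a + int p) * Pm d R bs"
        using carry_step[OF carr rel Suc.IH, where a=a and as=as and bs=bs] ok l by blast
      then show ?thesis unfolding xs ys Pm.simps using \<open>b = a + int p\<close> by simp
    qed
  qed
qed



fun Q :: "nat \<Rightarrow> (nat \<Rightarrow> nat \<Rightarrow> 'a::semiring_1 mat) \<Rightarrow> nat list \<Rightarrow> nat list \<Rightarrow> 'a mat" where
  "Q d rho (s # U) (t # W) = rho s t * Q d rho U W"
| "Q d rho _ _ = 1\<^sub>m d"

lemma Q_carrier:
  assumes rd: "\<And>s t. s < p \<Longrightarrow> t < p \<Longrightarrow> rho s t \<in> carrier_mat d d"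
  shows "length U = length W \<Longrightarrow> word p U \<Longrightarrow> word p W \<Longrightarrow> Q d rho U W \<in> carrier_mat d d"
proof (induction U W rule: list_induct2)
  case (Cons s U t W)
  then have "rho s t \<in> carrier_mat d d" "Q d rho U W \<in> carrier_mat d d"
    using rd by (auto simp: word_def)
  then show ?case by (simp add: mult_carrier_mat)
qed simp

lemma mult_entry:
  assumes "A \<in> carrier_mat d d" "B \<in> carrier_mat d d" "j < d" "k < d"
  shows "(A * B) $$ (j, k) = (\<Sum>i<d. A $$ (j, i) * B $$ (i, k))"
  using assms by (auto simp: scalar_prod_def atLeast0LessThan intro!: sum.cong)

lemma expand:
  fixes T :: "nat \<Rightarrow> (nat list \<Rightarrow> nat list \<Rightarrow> 'a::field)"
  assumes rd: "\<And>s t. s < p \<Longrightarrow> t < p \<Longrightarrow> rho s t \<in> carrier_mat d d"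
    and rdef: "\<And>s t k. s < p \<Longrightarrow> t < p \<Longrightarrow> k < d \<Longrightarrow>
                   shift p [s] [t] (T k) = (\<lambda>U W. \<Sum>j<d. rho s t $$ (j, k) * T j U W)"
  shows "length U = length W \<Longrightarrow> word p U \<Longrightarrow> word p W \<Longrightarrow> inM p U0 W0 \<Longrightarrow> k < d \<Longrightarrow>
     T k (U0 @ U) (W0 @ W) = (\<Sum>i<d. Q d rho U W $$ (i, k) * T i U0 W0)"
proof (induction U W arbitrary: U0 W0 k rule: list_induct2)
  case Nil
  have "(\<Sum>i<d. Q d rho [] [] $$ (i, k) * T i U0 W0) = (\<Sum>i<d. if i = k then T i U0 W0 else 0)"
    using Nil by (intro sum.cong) auto
  then show ?case using Nil by simp
next
  case (Cons s U t W)
  have st: "s < p" "t < p" "word p U" "word p W" using Cons.prems by (auto simp: word_def)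
  have inM1: "inM p (U0 @ [s]) (W0 @ [t])" using Cons.prems st by (auto simp: inM_def word_def)
  have cQ: "Q d rho U W \<in> carrier_mat d d" using Q_carrier[OF rd Cons.hyps st(3,4)] .
  have hT: "T i (U0 @ [s]) (W0 @ [t]) = (\<Sum>j<d. rho s t $$ (j, i) * T j U0 W0)" if "i < d" for i
    using fun_cong[OF fun_cong[OF rdef[OF st(1,2) that]], of U0 W0] Cons.prems
    by (simp add: shift_def)
  have "T k (U0 @ s # U) (W0 @ t # W) = T k ((U0 @ [s]) @ U) ((W0 @ [t]) @ W)" by simp
  also have "\<dots> = (\<Sum>i<d. Q d rho U W $$ (i, k) * T i (U0 @ [s]) (W0 @ [t]))"
    using Cons.IH[OF st(3,4) inM1 Cons.prems(4)] .
  also have "\<dots> = (\<Sum>i<d. Q d rho U W $$ (i, k) * (\<Sum>j<d. rho s t $$ (j, i) * T j U0 W0))"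
    using hT by simp
  also have "\<dots> = (\<Sum>i<d. \<Sum>j<d. rho s t $$ (j, i) * Q d rho U W $$ (i, k) * T j U0 W0)"
    by (simp add: sum_distrib_left mult_ac)
  also have "\<dots> = (\<Sum>j<d. \<Sum>i<d. rho s t $$ (j, i) * Q d rho U W $$ (i, k) * T j U0 W0)"
    by (rule sum.swap)
  also have "\<dots> = (\<Sum>j<d. (\<Sum>i<d. rho s t $$ (j, i) * Q d rho U W $$ (i, k)) * T j U0 W0)"
    by (simp add: sum_distrib_right)
  also have "\<dots> = (\<Sum>j<d. (rho s t * Q d rho U W) $$ (j, k) * T j U0 W0)"
    using mult_entry[OF rd[OF st(1,2)] cQ] Cons.prems(4) by simp
  finally show ?case by simp
qed

lemma word_val_snoc: "word_val p (U @ [s]) = word_val p U + int s * int p ^ length U"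
  unfolding word_val_def by (simp add: nth_append)

lemma word_val_snoc2: "word_val p (X @ [a, b]) = word_val p X + int p ^ length X * (int a + int p * int b)"
proof -
  have "word_val p (X @ [a, b]) = word_val p ((X @ [a]) @ [b])" by simp
  also have "\<dots> = word_val p X + int a * int p ^ length X + int b * int p ^ Suc (length X)"
    unfolding word_val_snoc by simp
  finally show ?thesis by (simp add: algebra_simps)
qed

lemma word_val_Cons: "word_val p (u # U) = int u + int p * word_val p U"
  unfolding word_val_def length_Cons sum.lessThan_Suc_shift
  by (simp del: sum.lessThan_Suc add: sum_distrib_left mult_ac)

definition diffs :: "nat list \<Rightarrow> nat list \<Rightarrow> int list" where
  "diffs U W = map2 (\<lambda>u w. int u - int w) U W"

lemma dval_diffs: "length U = length W \<Longrightarrow> dval p (diffs U W) = word_val p U - word_val p W"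
  by (induction U W rule: list_induct2) (auto simp: diffs_def word_val_Cons right_diff_distrib)

lemma okd_diffs: "length U = length W \<Longrightarrow> word p U \<Longrightarrow> word p W \<Longrightarrow> okd p (diffs U W)"
  by (induction U W rule: list_induct2) (auto simp: diffs_def okd_def word_def)

lemma length_diffs: "length U = length W \<Longrightarrow> length (diffs U W) = length U"
  by (simp add: diffs_def)

lemma Q_Pm:
  assumes h: "\<And>s t. s < p \<Longrightarrow> t < p \<Longrightarrow> rho s t = rho_diff rho (int s - int t)"
  shows "length U = length W \<Longrightarrow> word p U \<Longrightarrow> word p W \<Longrightarrow>
     Q d rho U W = Pm d (rho_diff rho) (diffs U W)"
  by (induction U W rule: list_induct2) (auto simp: diffs_def word_def h)

lemma coef_unique:
  fixes T :: "nat \<Rightarrow> (nat list \<Rightarrow> nat list \<Rightarrow> 'a::field)"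
  assumes indep: "\<And>c. (\<lambda>U W. \<Sum>k<d. c k * T k U W) = (\<lambda>U W. 0) \<Longrightarrow> \<forall>k<d. c k = 0"
    and e: "(\<lambda>U W. \<Sum>k<d. c k * T k U W) = (\<lambda>U W. \<Sum>k<d. c' k * T k U W)"
    and j: "j < d"
  shows "c j = c' j"
proof -
  have "(\<lambda>U W. \<Sum>k<d. (c k - c' k) * T k U W) = (\<lambda>U W. 0)"
  proof (intro ext)
    fix U W
    have "(\<Sum>k<d. c k * T k U W) = (\<Sum>k<d. c' k * T k U W)" using e by meson
    then show "(\<Sum>k<d. (c k - c' k) * T k U W) = 0"
      by (simp add: left_diff_distrib sum_subtractf)
  qed
  from indep[OF this] j show ?thesis by simp
qed



theorem mainTheorem11:
  fixes p d :: nat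
    and T :: "nat \<Rightarrow> (nat list \<Rightarrow> nat list \<Rightarrow> 'a::field)"
    and rho :: "nat \<Rightarrow> nat \<Rightarrow> 'a mat"
  assumes p_pos: "p \<ge> 1"
    and rec: "\<And>k. k < d \<Longrightarrow> Rec p (T k)"
    and indep: "\<And>c. (\<lambda>U W. \<Sum>k<d. c k * T k U W) = (\<lambda>U W. 0) \<Longrightarrow> \<forall>k<d. c k = 0"
    and closed: "\<And>S S' k. inM p S S' \<Longrightarrow> k < d \<Longrightarrow>
                   \<exists>c. shift p S S' (T k) = (\<lambda>U W. \<Sum>j<d. c j * T j U W)"
    and rho_dim: "\<And>s t. s < p \<Longrightarrow> t < p \<Longrightarrow> rho s t \<in> carrier_mat d d"
    and rho_def: "\<And>s t k. s < p \<Longrightarrow> t < p \<Longrightarrow> k < d \<Longrightarrow>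
                   shift p [s] [t] (T k) = (\<lambda>U W. \<Sum>j<d. rho s t $$ (j, k) * T j U W)"
  shows "(\<forall>k<d. toeplitz_type p (T k)) \<longleftrightarrow>
           ((\<forall>s t s' t'. s < p \<and> t < p \<and> s' < p \<and> t' < p \<and>
                int s - int t = int s' - int t' \<longrightarrow> rho s t = rho s' t')
            \<and> (\<forall>s t::int. 1 - int p \<le> s \<and> s < 0 \<and> 1 - int p \<le> t \<and> t < int p - 1 \<longrightarrow>
                rho_diff rho (s + int p) * rho_diff rho t = rho_diff rho s * rho_diff rho (t + 1)))"
proof
  assume toe: "\<forall>k<d. toeplitz_type p (T k)"
  have supp: "T k U W = 0" if "k < d" "\<not> inM p U W" for k U W
    using rec[OF that(1)] that(2) by (auto simp: Rec_def supported_def)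
  have P1: "rho s t = rho s' t'" if H: "s < p" "t < p" "s' < p" "t' < p" "int s - int t = int s' - int t'"
    for s t s' t'
  proof (rule eq_matI)
    fix j k assume jk: "j < dim_row (rho s' t')" "k < dim_col (rho s' t')"
    then have jk': "j < d" "k < d" using rho_dim[OF H(3,4)] by auto
    have "shift p [s] [t] (T k) = shift p [s'] [t'] (T k)"
    proof (intro ext)
      fix U W
      show "shift p [s] [t] (T k) U W = shift p [s'] [t'] (T k) U W"
      proof (cases "inM p U W")
        case True
        have "T k (U @ [s]) (W @ [t]) = T k (U @ [s']) (W @ [t'])"
        proof -
          have l: "length U = length W" using True by (simp add: inM_def)
          have "(int s - int t) * int p ^ length U = (int s' - int t') * int p ^ length U"
            using H(5) by simp
          then have wv: "word_val p (U @ [s]) - word_val p (W @ [t]) = word_val p (U @ [s']) - word_val p (W @ [t'])"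
            unfolding word_val_snoc l by (simp add: algebra_simps)
          have tt: "toeplitz_type p (T k)" using toe jk' by blast
          have i1: "inM p (U @ [s]) (W @ [t])" "inM p (U @ [s']) (W @ [t'])"
            using True H by (auto simp: inM_def word_def)
          show ?thesis
            using tt[unfolded toeplitz_type_def, rule_format, of "U @ [s]" "W @ [t]" "U @ [s']" "W @ [t']"]
              i1 wv by simp
        qed
        then show ?thesis using True by (simp add: shift_def)
      qed (simp add: shift_def)
    qed
    then have eqf: "(\<lambda>U W. \<Sum>j<d. rho s t $$ (j, k) * T j U W) = (\<lambda>U W. \<Sum>j<d. rho s' t' $$ (j, k) * T j U W)"
      by (simp only: rho_def[OF H(1,2) jk'(2)] rho_def[OF H(3,4) jk'(2)])
    show "rho s t $$ (j, k) = rho s' t' $$ (j, k)"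
      using coef_unique[OF indep eqf jk'(1)] by simp
  next
    show "dim_row (rho s t) = dim_row (rho s' t')" "dim_col (rho s t) = dim_col (rho s' t')"
      using rho_dim[OF H(1,2)] rho_dim[OF H(3,4)] by auto
  qed
  have Q2: "Q d rho [s1, s2] [t1, t2] = rho s1 t1 * rho s2 t2" if "s2 < p" "t2 < p" for s1 s2 t1 t2
    using rho_dim[OF that] by simp
  have P2: "rho s1 t1 * rho s2 t2 = rho s1' t1' * rho s2' t2'"
    if H: "s1 < p" "t1 < p" "s2 < p" "t2 < p" "s1' < p" "t1' < p" "s2' < p" "t2' < p"
      "int s1 - int t1 + int p * (int s2 - int t2) = int s1' - int t1' + int p * (int s2' - int t2')"
    for s1 t1 s2 t2 s1' t1' s2' t2'
  proof (rule eq_matI)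
    have c1: "rho s1 t1 * rho s2 t2 \<in> carrier_mat d d" using mult_carrier_mat rho_dim H by metis
    have c2: "rho s1' t1' * rho s2' t2' \<in> carrier_mat d d" using mult_carrier_mat rho_dim H by metis
    fix j k assume jk: "j < dim_row (rho s1' t1' * rho s2' t2')" "k < dim_col (rho s1' t1' * rho s2' t2')"
    then have jk': "j < d" "k < d" using c2 by auto
    have "(\<lambda>U W. \<Sum>i<d. Q d rho [s1, s2] [t1, t2] $$ (i, k) * T i U W) =
          (\<lambda>U W. \<Sum>i<d. Q d rho [s1', s2'] [t1', t2'] $$ (i, k) * T i U W)"
    proof (intro ext)
      fix U W
      show "(\<Sum>i<d. Q d rho [s1, s2] [t1, t2] $$ (i, k) * T i U W) =
          (\<Sum>i<d. Q d rho [s1', s2'] [t1', t2'] $$ (i, k) * T i U W)"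
      proof (cases "inM p U W")
        case True
        have w: "word p [s1, s2]" "word p [t1, t2]" "word p [s1', s2']" "word p [t1', t2']"
          using H by (auto simp: word_def)
        have "T k (U @ [s1, s2]) (W @ [t1, t2]) = T k (U @ [s1', s2']) (W @ [t1', t2'])"
        proof -
          have "word_val p (U @ [s1, s2]) - word_val p (W @ [t1, t2]) =
                word_val p (U @ [s1', s2']) - word_val p (W @ [t1', t2'])"
          proof -
            have e: "\<And>X a b. word_val p (X @ [a, b]) = word_val p X + int p ^ length X * (int a + int p * int b)"
              by (rule word_val_snoc2)
            have l: "length U = length W" using True by (simp add: inM_def)
            have "int s1 + int p * int s2 - (int t1 + int p * int t2) =
                  int s1' + int p * int s2' - (int t1' + int p * int t2')" using H(9) by (simp add: algebra_simps)
            then have "int p ^ length U * (int s1 + int p * int s2) - int p ^ length U * (int t1 + int p * int t2) =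
                  int p ^ length U * (int s1' + int p * int s2') - int p ^ length U * (int t1' + int p * int t2')"
              by (metis right_diff_distrib)
            then show ?thesis unfolding e l by (simp add: algebra_simps)
          qed
          note wv = this
          have tt: "toeplitz_type p (T k)" using toe jk' by blast
          have i1: "inM p (U @ [s1, s2]) (W @ [t1, t2])" "inM p (U @ [s1', s2']) (W @ [t1', t2'])"
            using True w by (auto simp: inM_def word_def)
          show ?thesis
            using tt[unfolded toeplitz_type_def, rule_format, of "U @ [s1, s2]" "W @ [t1, t2]" "U @ [s1', s2']" "W @ [t1', t2']"]
              i1 wv by simp
        qed
        then show ?thesis
          using expand[OF rho_dim rho_def, of "[s1, s2]" "[t1, t2]" U W k]
                expand[OF rho_dim rho_def, of "[s1', s2']" "[t1', t2']" U W k] True w jk' by simp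
      next
        case False
        then show ?thesis using supp by simp
      qed
    qed
    note eqf = this
    have "Q d rho [s1, s2] [t1, t2] $$ (j, k) = Q d rho [s1', s2'] [t1', t2'] $$ (j, k)"
      using coef_unique[OF indep eqf jk'(1)] by simp
    then show "(rho s1 t1 * rho s2 t2) $$ (j, k) = (rho s1' t1' * rho s2' t2') $$ (j, k)"
      using Q2 H by simp
  next
    show "dim_row (rho s1 t1 * rho s2 t2) = dim_row (rho s1' t1' * rho s2' t2')"
      "dim_col (rho s1 t1 * rho s2 t2) = dim_col (rho s1' t1' * rho s2' t2')"
      using rho_dim[OF H(1,2)] rho_dim[OF H(3,4)] rho_dim[OF H(5,6)] rho_dim[OF H(7,8)] by auto
  qed
  define sd where "sd m = (if m \<ge> 0 then nat m else 0)" for m :: int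
  define td where "td m = (if m \<ge> 0 then 0 else nat (- m))" for m :: int
  have rd: "rho_diff rho m = rho (sd m) (td m)" for m
    by (simp add: rho_diff_def sd_def td_def)
  have sdtd: "int (sd m) - int (td m) = m" for m by (simp add: sd_def td_def)
  have sdp: "sd m < p" "td m < p" if "1 - int p \<le> m" "m \<le> int p - 1" for m
    using that by (auto simp: sd_def td_def)
  show "(\<forall>s t s' t'. s < p \<and> t < p \<and> s' < p \<and> t' < p \<and>
                int s - int t = int s' - int t' \<longrightarrow> rho s t = rho s' t')
            \<and> (\<forall>s t::int. 1 - int p \<le> s \<and> s < 0 \<and> 1 - int p \<le> t \<and> t < int p - 1 \<longrightarrow>
                rho_diff rho (s + int p) * rho_diff rho t = rho_diff rho s * rho_diff rho (t + 1))"
  proof (intro conjI allI impI)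
    fix s t s' t' assume "s < p \<and> t < p \<and> s' < p \<and> t' < p \<and> int s - int t = int s' - int t'"
    then show "rho s t = rho s' t'" using P1 by blast
  next
    fix s t :: int assume H: "1 - int p \<le> s \<and> s < 0 \<and> 1 - int p \<le> t \<and> t < int p - 1"
    have "rho (sd (s + int p)) (td (s + int p)) * rho (sd t) (td t) =
          rho (sd s) (td s) * rho (sd (t + 1)) (td (t + 1))"
      apply (rule P2)
      using H sdp[of "s + int p"] sdp[of t] sdp[of s] sdp[of "t + 1"] apply auto[8]
      unfolding sdtd by (simp add: algebra_simps)
    then show "rho_diff rho (s + int p) * rho_diff rho t = rho_diff rho s * rho_diff rho (t + 1)"
      unfolding rd .
  qed
next
  assume H: "(\<forall>s t s' t'. s < p \<and> t < p \<and> s' < p \<and> t' < p \<and>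
                int s - int t = int s' - int t' \<longrightarrow> rho s t = rho s' t')
            \<and> (\<forall>s t::int. 1 - int p \<le> s \<and> s < 0 \<and> 1 - int p \<le> t \<and> t < int p - 1 \<longrightarrow>
                rho_diff rho (s + int p) * rho_diff rho t = rho_diff rho s * rho_diff rho (t + 1))"
  have h: "rho s t = rho_diff rho (int s - int t)" if "s < p" "t < p" for s t
  proof (cases "t \<le> s")
    case True
    then show ?thesis using H that unfolding rho_diff_def by auto
  next
    case False
    then show ?thesis using H that unfolding rho_diff_def by auto
  qed
  have carr: "rho_diff rho m \<in> carrier_mat d d" if "1 - int p \<le> m" "m \<le> int p - 1" for m
    using that rho_dim unfolding rho_diff_def by auto
  have rel: "rho_diff rho (s + int p) * rho_diff rho t = rho_diff rho s * rho_diff rho (t + 1)"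
    if "1 - int p \<le> s" "s < 0" "1 - int p \<le> t" "t < int p - 1" for s t
    using H that by blast
  have e0: "inM p [] []" by (simp add: inM_def word_def)
  have rep: "T k U W = (\<Sum>i<d. Pm d (rho_diff rho) (diffs U W) $$ (i, k) * T i [] [])"
    if "inM p U W" "k < d" for k U W
    using expand[OF rho_dim rho_def, of U W "[]" "[]" k] Q_Pm[OF h, where U=U and W=W and d=d] that e0
    by (simp add: inM_def)
  show "\<forall>k<d. toeplitz_type p (T k)"
    unfolding toeplitz_type_def
  proof (intro allI impI)
    fix k U W U' W'
    assume k: "k < d" and A: "inM p U W \<and> inM p U' W' \<and> length U = length U' \<and>
         word_val p U - word_val p W = word_val p U' - word_val p W'"
    have "Pm d (rho_diff rho) (diffs U W) = Pm d (rho_diff rho) (diffs U' W')"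
      apply (rule core[OF carr rel, where n = "length U"])
      using A by (auto simp: inM_def length_diffs okd_diffs dval_diffs)
    then show "T k U W = T k U' W'" using rep A k by simp
  qed
qed

end
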